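(* Let $(\psi^{(j)},p^{(j)},A^{(j)})$ on $[0,T_j]$, $j=1,2$, be two regular normal extremals, and suppose that at switching times $t_1$ of the first and $t_2$ of the second the reduced data coincide: $(\phi_1,\phi_2,\phi_3)^{(1)}(t_1)=(\phi_1,\phi_2,\phi_3)^{(2)}(t_2)=(0,a,b)$ with $a\neq0$. Then for every $\tau\ge0$ with $t_1+\tau\le T_1$ and $t_2+\tau\le T_2$, one has $(\phi_1,\phi_2,\phi_3)^{(1)}(t_1+\tau)=(\phi_1,\phi_2,\phi_3)^{(2)}(t_2+\tau)$, and $A^{(1)}(t_1+\tau)=A^{(2)}(t_2+\tau)$ for almost every such $\tau$.
   Context: Fix $\gamma\in(0,\pi/2)$, $s=\sin\gamma$, $c=\cos\gamma$, and $X=\begin{pmatrix}0&s^2&sc\\-s^2&0&0\\-sc&0&0\end{pmatrix}$, $Y=\begin{pmatrix}0&1&0\\-1&0&0\\0&0&0\end{pmatrix}$ on $\mathbb R^3$ with standard inner product. Let $\Sigma=\{\psi:\langle e_3,\psi\rangle=0\}$, $\psi_0=(0,s,c)^\top$. Admissible controls are piecewise constant $A:[0,T]\to\{X,Y\}$ with finitely many discontinuities (switching times), with trajectory $\dot\psi=A(t)\psi$, $\psi(0)=\psi_0$. A normal extremal is such a trajectory with a nonzero absolutely continuous costate $p$ satisfying $\dot p=-A(t)^\top p$ and, for a.e. $t$, $\langle p,A(t)\psi\rangle=\max_{B\in\{X,Y\}}\langle p,B\psi\rangle$. Let $F_1=X-Y$, $F_2=[X,Y]$, $F_3=[Y,[X,Y]]$,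 $\phi_i=\langle p,F_i\psi\rangle$; the switching function is $\Phi=\phi_1$. A normal extremal is regular (bang–bang) if $\Phi$ vanishes only at isolated times and at every switching time $\phi_1=0$ and $\phi_2\neq0$. *)

theory Defs
  imports "HOL-Analysis.Analysis"
begin

definition Xm :: "real \<Rightarrow> real^3^3" where
  "Xm \<gamma> = vector [vector [0, (sin \<gamma>)^2, sin \<gamma> * cos \<gamma>],
                     vector [-((sin \<gamma>)^2), 0, 0],
                     vector [-(sin \<gamma> * cos \<gamma>), 0, 0]]"

definition Ym :: "real^3^3" where
  "Ym = vector [vector [0, 1, 0], vector [-1, 0, 0], vector [0, 0, 0]]"

definition psi0 :: "real \<Rightarrow> real^3" where
  "psi0 \<gamma> = vector [0, sin \<gamma>, cos \<gamma>]"

definition lie :: "real^3^3 \<Rightarrow> real^3^3 \<Rightarrow> real^3^3" where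
  "lie M N = M ** N - N ** M"

definition F1 :: "real \<Rightarrow> real^3^3" where "F1 \<gamma> = Xm \<gamma> - Ym"
definition F2 :: "real \<Rightarrow> real^3^3" where "F2 \<gamma> = lie (Xm \<gamma>) Ym"
definition F3 :: "real \<Rightarrow> real^3^3" where "F3 \<gamma> = lie Ym (lie (Xm \<gamma>) Ym)"

definition phi :: "real^3^3 \<Rightarrow> (real \<Rightarrow> real^3) \<Rightarrow> (real \<Rightarrow> real^3) \<Rightarrow> real \<Rightarrow> real" where
  "phi F p \<psi> t = p t \<bullet> (F *v \<psi> t)"

definition phis :: "real \<Rightarrow> (real \<Rightarrow> real^3) \<Rightarrow> (real \<Rightarrow> real^3) \<Rightarrow> real \<Rightarrow> real \<times> real \<times> real" where
  "phis \<gamma> p \<psi> t = (phi (F1 \<gamma>) p \<psi> t, phi (F2 \<gamma>) p \<psi> t, phi (F3 \<gamma>) p \<psi> t)"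

text \<open>Admissible control: values in {X,Y} on [0,T], piecewise constant with finitely many
  discontinuities (since the range is discrete, continuity at a point = locally constant there).\<close>
definition admissible_control :: "real \<Rightarrow> real \<Rightarrow> (real \<Rightarrow> real^3^3) \<Rightarrow> bool" where
  "admissible_control \<gamma> T A \<longleftrightarrow>
     (\<forall>t\<in>{0..T}. A t \<in> {Xm \<gamma>, Ym}) \<and>
     (\<exists>S. finite S \<and> (\<forall>t\<in>{0..T} - S. continuous (at t within {0..T}) A))"

definition switching_time :: "real \<Rightarrow> (real \<Rightarrow> real^3^3) \<Rightarrow> real \<Rightarrow> bool" where
  "switching_time T A t \<longleftrightarrow> t \<in> {0..T} \<and> \<not> continuous (at t within {0..T}) A"

text \<open>Trajectory (Caratheodory solution, i.e. absolutely continuous, ODE a.e.) from psi0.\<close>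
definition trajectory :: "real \<Rightarrow> real \<Rightarrow> (real \<Rightarrow> real^3^3) \<Rightarrow> (real \<Rightarrow> real^3) \<Rightarrow> bool" where
  "trajectory \<gamma> T A \<psi> \<longleftrightarrow> \<psi> 0 = psi0 \<gamma> \<and>
     (\<forall>t\<in>{0..T}. ((\<lambda>s. A s *v \<psi> s) has_integral (\<psi> t - \<psi> 0)) {0..t})"

text \<open>Costate equation p' = - A^T p (absolutely continuous, a.e.), in integral form.\<close>
definition costate :: "real \<Rightarrow> (real \<Rightarrow> real^3^3) \<Rightarrow> (real \<Rightarrow> real^3) \<Rightarrow> bool" where
  "costate T A p \<longleftrightarrow>
     (\<forall>t\<in>{0..T}. ((\<lambda>s. - (transpose (A s) *v p s)) has_integral (p t - p 0)) {0..t})"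

definition normal_extremal ::
  "real \<Rightarrow> real \<Rightarrow> (real \<Rightarrow> real^3) \<Rightarrow> (real \<Rightarrow> real^3) \<Rightarrow> (real \<Rightarrow> real^3^3) \<Rightarrow> bool" where
  "normal_extremal \<gamma> T \<psi> p A \<longleftrightarrow>
     admissible_control \<gamma> T A \<and> trajectory \<gamma> T A \<psi> \<and> costate T A p \<and>
     (\<exists>t\<in>{0..T}. p t \<noteq> 0) \<and>
     (AE t in lborel. t \<in> {0..T} \<longrightarrow>
        p t \<bullet> (A t *v \<psi> t) = max (p t \<bullet> (Xm \<gamma> *v \<psi> t)) (p t \<bullet> (Ym *v \<psi> t)))"

definition regular_extremal ::
  "real \<Rightarrow> real \<Rightarrow> (real \<Rightarrow> real^3) \<Rightarrow> (real \<Rightarrow> real^3) \<Rightarrow> (real \<Rightarrow> real^3^3) \<Rightarrow> bool" where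
  "regular_extremal \<gamma> T \<psi> p A \<longleftrightarrow>
     normal_extremal \<gamma> T \<psi> p A \<and>
     (\<forall>t\<in>{0..T}. phi (F1 \<gamma>) p \<psi> t = 0 \<longrightarrow>
        (\<exists>e>0. \<forall>s\<in>{0..T}. s \<noteq> t \<and> \<bar>s - t\<bar> < e \<longrightarrow> phi (F1 \<gamma>) p \<psi> s \<noteq> 0)) \<and>
     (\<forall>t. switching_time T A t \<longrightarrow>
        phi (F1 \<gamma>) p \<psi> t = 0 \<and> phi (F2 \<gamma>) p \<psi> t \<noteq> 0)"

end

theory Submission
  imports Defs
begin

lemma mat3_eq: "(M::real^3^3) = N \<longleftrightarrow> (\<forall>i j. M$i$j = N$i$j)"
  by (auto simp: vec_eq_iff)
lemmas msimps = Xm_def Ym_def F1_def F2_def F3_def lie_def matrix_matrix_mult_def sum_3 mat3_eq forall_3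

lemma br11: "F1 g ** Xm g - Xm g ** F1 g = F2 g"
  by (simp add: msimps algebra_simps)
lemma br12: "F1 g ** Ym - Ym ** F1 g = F2 g"
  by (simp add: msimps algebra_simps)
lemma br22: "F2 g ** Ym - Ym ** F2 g = - F3 g"
  by (simp add: msimps algebra_simps)
lemma br32: "F3 g ** Ym - Ym ** F3 g = F2 g"
  by (simp add: msimps algebra_simps)
lemma br21: "F2 g ** Xm g - Xm g ** F2 g = - ((sin g)^2) *\<^sub>R F1 g"
proof -
  have c: "cos g * cos g = 1 - sin g * sin g" using sin_cos_squared_add[of g]
    by (simp add: power2_eq_square)
  have e: "sin g * sin g * (cos g * cos g + sin g * sin g) = sin g * sin g"
    using sin_cos_squared_add[of g] by (simp add: power2_eq_square)
  have e2: "cos g * (cos g * (sin g * sin g)) + sin g * (sin g * (sin g * sin g)) = sin g * sin g"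
    using e by algebra
  show ?thesis by (simp add: msimps algebra_simps power2_eq_square e2)
qed
lemma br31: "F3 g ** Xm g - Xm g ** F3 g = ((sin g)^2) *\<^sub>R F2 g"
  by (simp add: msimps algebra_simps power2_eq_square)

lemma sc_pos: assumes "0 < g" "g < pi/2" shows "0 < sin g" "0 < cos g"
  using assms by (auto intro!: sin_gt_zero cos_gt_zero)

lemma XY_ne: assumes "0 < g" "g < pi/2" shows "Xm g \<noteq> Ym"
proof
  assume "Xm g = Ym"
  hence "Xm g $1$3 = Ym $1$3" by simp
  hence "sin g * cos g = 0" by (simp add: Xm_def Ym_def)
  with sc_pos[OF assms] show False by simp
qed

lemma inner_bracket:
  "p \<bullet> (F *v (A *v v)) + (- (transpose A *v p)) \<bullet> (F *v v) = p \<bullet> ((F ** A - A ** F) *v (v::real^3))"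
  by (simp add: matrix_vector_mul_assoc dot_lmul_matrix matrix_vector_mult_diff_rdistrib inner_diff_right)

lemma int_cont:
  fixes x :: "real \<Rightarrow> real^3"
  assumes "\<forall>t\<in>{0..T}. (G has_integral (x t - x 0)) {0..t}"
  shows "continuous_on {0..T} x"
proof (cases "0 \<le> T")
  case True
  have "(G has_integral (x T - x 0)) {0..T}" using assms True by simp
  hence GI: "G integrable_on {0..T}" by (rule has_integral_integrable)
  have c: "continuous_on {0..T} (\<lambda>t. x 0 + integral {0..t} G)"
    by (rule continuous_on_add[OF continuous_on_const indefinite_integral_continuous_1[OF GI]])
  have e: "x 0 + integral {0..t} G = x t" if "t \<in> {0..T}" for t
  proof -
    have "(G has_integral (x t - x 0)) {0..t}" using assms that by blast
    then show ?thesis by (simp add: integral_unique)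
  qed
  show ?thesis by (rule continuous_on_cong[THEN iffD1, OF refl e c]) 
next
  case False then show ?thesis by simp
qed

lemma int_deriv:
  fixes x :: "real \<Rightarrow> real^3"
  assumes "\<forall>t\<in>{0..T}. (G has_integral (x t - x 0)) {0..t}"
    and t: "t \<in> {0<..<T}" and cG: "continuous (at t within {0..T}) G"
  shows "(x has_vector_derivative G t) (at t)"
proof -
  have "(G has_integral (x T - x 0)) {0..T}" using assms t by simp
  hence GI: "G integrable_on {0..T}" by (rule has_integral_integrable)
  have "((\<lambda>u. integral {0..u} G) has_vector_derivative G t) (at t within ({0..T} - {}))"
    using t cG by (intro integral_has_vector_derivative_continuous_at GI) auto
  hence "((\<lambda>u. x 0 + integral {0..u} G) has_vector_derivative G t) (at t within {0..T})"
    by (auto intro!: derivative_eq_intros)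
  hence "(x has_vector_derivative G t) (at t within {0..T})"
  proof (rule has_vector_derivative_transform_within[where d=1])
    fix y assume "y \<in> {0..T}"
    then have "(G has_integral (x y - x 0)) {0..y}" using assms by blast
    then show "x 0 + integral {0..y} G = x y" by (simp add: integral_unique)
  qed (use t in auto)
  thus ?thesis using t by (simp add: at_within_Icc_at)
qed

lemma A_loc:
  fixes A :: "real \<Rightarrow> real^3^3"
  assumes "\<forall>s\<in>{0..T}. A s \<in> {X, Y}" "X \<noteq> Y" "t \<in> {0..T}"
    "continuous (at t within {0..T}) A"
  shows "\<exists>d>0. \<forall>s\<in>{0..T}. dist s t < d \<longrightarrow> A s = A t"
proof -
  have "dist X Y > 0" using assms by simp
  then obtain d where d: "d > 0" "\<forall>s\<in>{0..T}. dist s t < d \<longrightarrow> dist (A s) (A t) < dist X Y"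
    using assms(4) unfolding continuous_within_eps_delta by blast
  have "\<forall>s\<in>{0..T}. dist s t < d \<longrightarrow> A s = A t"
  proof (intro ballI impI)
    fix s assume s: "s \<in> {0..T}" "dist s t < d"
    have "A s \<in> {X,Y}" "A t \<in> {X,Y}" using assms s by auto
    thus "A s = A t" using d s by (auto simp: dist_commute)
  qed
  with d show ?thesis by blast
qed

lemmas mvc = bounded_linear.continuous_on[OF matrix_vector_mul_bounded_linear]
  bounded_linear.continuous[OF matrix_vector_mul_bounded_linear]
lemmas mvd = bounded_linear.has_derivative[OF matrix_vector_mul_bounded_linear]


lemma ext_cont:
  assumes "normal_extremal g T \<psi> p A"
  shows "continuous_on {0..T} \<psi>" "continuous_on {0..T} p"
  using assms unfolding normal_extremal_def trajectory_def costate_def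
  by (auto intro: int_cont)

lemma phi_cont:
  assumes "continuous_on S \<psi>" "continuous_on S p"
  shows "continuous_on S (phi F p \<psi>)"
  unfolding phi_def by (intro continuous_on_inner assms(2) mvc(1) assms(1))

lemma ext_deriv:
  assumes NE: "normal_extremal g T \<psi> p A" and g: "0 < g" "g < pi/2"
    and t: "t \<in> {0<..<T}" and cA: "continuous (at t within {0..T}) A"
  shows "(\<psi> has_vector_derivative (A t *v \<psi> t)) (at t)"
    "(p has_vector_derivative (- (transpose (A t) *v p t))) (at t)"
proof -
  have AV: "\<forall>s\<in>{0..T}. A s \<in> {Xm g, Ym}" using NE unfolding normal_extremal_def admissible_control_def by auto
  obtain d where d: "d > 0" "\<forall>s\<in>{0..T}. dist s t < d \<longrightarrow> A s = A t"
    using A_loc[OF AV XY_ne[OF g], of t] t cA by auto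
  have cpsi: "continuous_on {0..T} \<psi>" and cp: "continuous_on {0..T} p" using ext_cont[OF NE] by auto
  have tT: "t \<in> {0..T}" using t by auto
  have cpsit: "continuous (at t within {0..T}) \<psi>" and cpt: "continuous (at t within {0..T}) p"
    using cpsi cp tT by (auto simp: continuous_on_eq_continuous_within)
  have c1: "continuous (at t within {0..T}) (\<lambda>s. A t *v \<psi> s)"
    by (rule mvc(2)[OF cpsit])
  have c1': "continuous (at t within {0..T}) (\<lambda>s. A s *v \<psi> s)"
    by (rule continuous_transform_within[OF c1 d(1) tT]) (use d in auto)
  have c2: "continuous (at t within {0..T}) (\<lambda>s. - (transpose (A t) *v p s))"
    by (rule continuous_minus[OF mvc(2)[OF cpt]])
  have c2': "continuous (at t within {0..T}) (\<lambda>s. - (transpose (A s) *v p s))"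
    by (rule continuous_transform_within[OF c2 d(1) tT]) (use d in auto)
  show "(\<psi> has_vector_derivative (A t *v \<psi> t)) (at t)"
    using int_deriv[OF _ t c1'] NE unfolding normal_extremal_def trajectory_def by auto
  show "(p has_vector_derivative (- (transpose (A t) *v p t))) (at t)"
    using int_deriv[OF _ t c2'] NE unfolding normal_extremal_def costate_def by auto
qed

lemma phi_deriv:
  assumes "(\<psi> has_vector_derivative (M *v \<psi> t)) (at t)"
    "(p has_vector_derivative (- (transpose M *v p t))) (at t)"
  shows "(phi F p \<psi> has_real_derivative (p t \<bullet> ((F ** M - M ** F) *v \<psi> t))) (at t)"
proof -
  define D where "D = - (transpose M *v p t)"
  have d1: "((\<lambda>t. F *v \<psi> t) has_derivative (\<lambda>h. F *v (h *\<^sub>R (M *v \<psi> t)))) (at t)"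
    by (rule mvd) (use assms(1) in \<open>simp add: has_vector_derivative_def\<close>)
  have d2: "(p has_derivative (\<lambda>h. h *\<^sub>R D)) (at t)"
    using assms(2) by (simp add: has_vector_derivative_def D_def)
  have d3: "((\<lambda>t. p t \<bullet> (F *v \<psi> t)) has_derivative
     (\<lambda>h. p t \<bullet> (F *v (h *\<^sub>R (M *v \<psi> t))) + (h *\<^sub>R D) \<bullet> (F *v \<psi> t))) (at t)"
    by (rule has_derivative_inner[OF d2 d1])
  have e: "p t \<bullet> (F *v (h *\<^sub>R (M *v \<psi> t))) + (h *\<^sub>R D) \<bullet> (F *v \<psi> t)
      = (p t \<bullet> ((F ** M - M ** F) *v \<psi> t)) * h" for h
  proof -
    have "p t \<bullet> (F *v (h *\<^sub>R (M *v \<psi> t))) + (h *\<^sub>R D) \<bullet> (F *v \<psi> t)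
       = h * (p t \<bullet> (F *v (M *v \<psi> t)) + D \<bullet> (F *v \<psi> t))"
      by (simp add: matrix_vector_mult_scaleR distrib_left)
    also have "\<dots> = h * (p t \<bullet> ((F ** M - M ** F) *v \<psi> t))"
      unfolding D_def by (subst inner_bracket) simp
    finally show ?thesis by simp
  qed
  show ?thesis using d3 unfolding has_field_derivative_def phi_def e .
qed

lemma mono_strict:
  fixes f f' :: "real \<Rightarrow> real"
  assumes ab: "a < b" and cf: "continuous_on {a..b} f"
    and d: "\<And>x. a < x \<Longrightarrow> x < b \<Longrightarrow> (f has_real_derivative f' x) (at x)"
    and n: "\<And>x. a < x \<Longrightarrow> x < b \<Longrightarrow> f' x < 0"
  shows "f b < f a"
proof -
  have "\<And>x. a < x \<Longrightarrow> x < b \<Longrightarrow> f differentiable (at x)"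
    using d real_differentiable_def by blast
  then obtain l z where z: "a < z" "z < b" "(f has_real_derivative l) (at z)" "f b - f a = (b - a) * l"
    using MVT[OF ab cf] by blast
  have "l = f' z" using DERIV_unique[OF z(3) d[OF z(1,2)]] .
  with n[OF z(1,2)] z(4) ab have "f b - f a < 0" by (simp add: mult_pos_neg)
  thus ?thesis by simp
qed

lemma gron:
  fixes E E' :: "real \<Rightarrow> real"
  assumes ab: "a < b" and cE: "continuous_on {a..b} E" and Ea: "E a = 0"
    and nn: "\<And>x. x \<in> {a..b} \<Longrightarrow> E x \<ge> 0"
    and d: "\<And>x. a < x \<Longrightarrow> x < b \<Longrightarrow> (E has_real_derivative E' x) (at x)"
    and le: "\<And>x. a < x \<Longrightarrow> x < b \<Longrightarrow> E' x \<le> E x"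
  shows "E b = 0"
proof -
  define G where "G x = E x * exp (- x)" for x
  have cG: "continuous_on {a..b} G" unfolding G_def by (intro continuous_intros cE)
  have dG: "(G has_real_derivative (E' x * exp (- x) - E x * exp (- x))) (at x)"
    if "a < x" "x < b" for x
    unfolding G_def using d[OF that] by (auto intro!: derivative_eq_intros)
  have "\<And>x. a < x \<Longrightarrow> x < b \<Longrightarrow> G differentiable (at x)"
    using dG real_differentiable_def by blast
  then obtain l z where z: "a < z" "z < b" "(G has_real_derivative l) (at z)" "G b - G a = (b - a) * l"
    using MVT[OF ab cG] by blast
  have "l = E' z * exp (- z) - E z * exp (- z)" using DERIV_unique[OF z(3) dG[OF z(1,2)]] .
  also have "\<dots> = (E' z - E z) * exp (- z)" by (simp add: algebra_simps)
  finally have "l \<le> 0" using le[OF z(1,2)] by (simp add: mult_nonpos_nonneg)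
  hence "(b - a) * l \<le> 0" using ab by (simp add: mult_nonneg_nonpos)
  hence "G b \<le> G a" using z(4) by linarith
  hence "E b * exp (- b) \<le> 0" using Ea by (simp add: G_def)
  hence "E b \<le> 0" by (simp add: mult_le_0_iff)
  with nn[of b] ab show ?thesis by simp
qed

lemma sign_const:
  fixes f :: "real \<Rightarrow> real"
  assumes cf: "continuous_on {a<..<b} f" and nz: "\<And>x. x \<in> {a<..<b} \<Longrightarrow> f x \<noteq> 0"
  shows "(\<forall>x\<in>{a<..<b}. f x > 0) \<or> (\<forall>x\<in>{a<..<b}. f x < 0)"
proof (rule ccontr)
  assume "\<not> ?thesis"
  then obtain x y where xy: "x \<in> {a<..<b}" "y \<in> {a<..<b}" "f x \<le> 0" "f y \<ge> 0"
    by (meson not_less)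
  have sub: "{min x y..max x y} \<subseteq> {a<..<b}" using xy by auto
  have "\<exists>z. min x y \<le> z \<and> z \<le> max x y \<and> f z = 0"
  proof (cases "x \<le> y")
    case True
    then show ?thesis using IVT'[of f x 0 y] xy continuous_on_subset[OF cf sub] by auto
  next
    case False
    then show ?thesis using IVT2'[of f x 0 y] xy continuous_on_subset[OF cf sub] by auto
  qed
  then obtain z where "z \<in> {min x y..max x y}" "f z = 0" by auto
  with sub nz show False by auto
qed

lemma right_lim_nonneg:
  fixes f :: "real \<Rightarrow> real"
  assumes ab: "a < b" and cf: "continuous_on {a..b} f" and pos: "\<And>x. a < x \<Longrightarrow> x < b \<Longrightarrow> f x > 0"
  shows "f a \<ge> 0"
proof (rule ccontr)
  assume neg: "\<not> f a \<ge> 0"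
  have "continuous (at a within {a..b}) f" using ab cf by (simp add: continuous_on_eq_continuous_within)
  moreover have "- f a > 0" using neg by simp
  ultimately obtain d where d: "d > 0" "\<forall>x\<in>{a..b}. dist x a < d \<longrightarrow> dist (f x) (f a) < - f a"
    unfolding continuous_within_eps_delta by blast
  obtain m where md: "0 < m" "m \<le> b - a" "m \<le> d" using d(1) ab by (intro that[of "min d (b - a)"]) auto
  define x where "x = a + m / 2"
  have x1a: "a < x" using md unfolding x_def by linarith
  have x1b: "x < b" using md unfolding x_def by linarith
  have x1c: "x - a < d" using md unfolding x_def by linarith
  note x1 = x1a x1b x1c
  have x: "a < x" "x < b" "x \<in> {a..b}" "dist x a < d" using x1 by (auto simp: dist_real_def)
  have "dist (f x) (f a) < - f a" using d x by blast
  hence "f x < 0" by (auto simp: dist_real_def)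
  with pos[OF x(1,2)] show False by simp
qed

lemma neg_start:
  fixes f g :: "real \<Rightarrow> real"
  assumes ab: "a < b" and cf: "continuous_on {a..b} f" and cg: "continuous_on {a..b} g"
    and fa: "f a = 0"
    and d: "\<And>x. a < x \<Longrightarrow> x < b \<Longrightarrow> (f has_real_derivative g x) (at x)"
    and ga: "g a < 0"
  shows "\<exists>x. a < x \<and> x < b \<and> f x < 0"
proof -
  have "continuous (at a within {a..b}) g" using ab cg by (simp add: continuous_on_eq_continuous_within)
  moreover have "- g a > 0" using ga by simp
  ultimately obtain d where dd: "d > 0" "\<forall>x\<in>{a..b}. dist x a < d \<longrightarrow> dist (g x) (g a) < - g a"
    unfolding continuous_within_eps_delta by blast
  obtain m where md: "0 < m" "m \<le> b - a" "m \<le> d" using dd(1) ab by (intro that[of "min d (b - a)"]) auto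
  define x where "x = a + m / 2"
  have xa: "a < x" using md unfolding x_def by linarith
  have xb: "x < b" using md unfolding x_def by linarith
  have xc: "x - a < d" using md unfolding x_def by linarith
  note x = xa xb xc
  have gneg: "g y < 0" if "a < y" "y < x" for y
  proof -
    have "y \<in> {a..b}" "dist y a < d" using that x by (auto simp: dist_real_def)
    hence "dist (g y) (g a) < - g a" using dd by blast
    thus ?thesis by (auto simp: dist_real_def)
  qed
  have "f x < f a"
    by (rule mono_strict[OF x(1) continuous_on_subset[OF cf]]) (use x d gneg in auto)
  with x fa show ?thesis by auto
qed

lemma mode_contra:
  fixes f1 g1 f2 g2 :: "real \<Rightarrow> real"
  assumes ab: "a < b" and k: "0 < k"
    and c: "continuous_on {a..b} f1" "continuous_on {a..b} g1" "continuous_on {a..b} f2" "continuous_on {a..b} g2"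
    and e: "f1 a = f2 a" "g1 a = g2 a"
    and d1: "\<And>x. a < x \<Longrightarrow> x < b \<Longrightarrow> (f1 has_real_derivative g1 x) (at x)"
    and d2: "\<And>x. a < x \<Longrightarrow> x < b \<Longrightarrow> (f2 has_real_derivative g2 x) (at x)"
    and d3: "\<And>x. a < x \<Longrightarrow> x < b \<Longrightarrow> (g1 has_real_derivative (- k * f1 x)) (at x)"
    and p1: "\<And>x. a < x \<Longrightarrow> x < b \<Longrightarrow> f1 x > 0"
    and p2: "\<And>x. a < x \<Longrightarrow> x < b \<Longrightarrow> f2 x < 0"
  shows False
proof -
  have "f1 a \<ge> 0" by (rule right_lim_nonneg[OF ab c(1) p1])
  moreover have "(\<lambda>x. - f2 x) a \<ge> 0"
    by (rule right_lim_nonneg[OF ab]) (use c p2 in \<open>auto intro!: continuous_intros\<close>)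
  ultimately have fa: "f1 a = 0" "f2 a = 0" using e by auto
  have g1a: "g1 a \<ge> 0"
  proof (rule ccontr)
    assume "\<not> g1 a \<ge> 0"
    then obtain x where "a < x" "x < b" "f1 x < 0"
      using neg_start[OF ab c(1) c(2) fa(1) d1] by auto
    with p1 show False by force
  qed
  have g2a: "g2 a \<le> 0"
  proof (rule ccontr)
    assume "\<not> g2 a \<le> 0"
    then obtain x where "a < x" "x < b" "- f2 x < 0"
      using neg_start[OF ab, of "\<lambda>x. - f2 x" "\<lambda>x. - g2 x"] c fa d2
      by (auto intro!: continuous_intros derivative_eq_intros)
    with p2 show False by force
  qed
  have ga: "g1 a = 0" using g1a g2a e by auto
  define m where "m = (a + b) / 2"
  have m: "a < m" "m < b" using ab by (auto simp: m_def)
  have gneg: "g1 y < 0" if "a < y" "y < m" for y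
  proof -
    have "g1 y < g1 a"
      by (rule mono_strict[where f'="\<lambda>x. - k * f1 x", OF that(1) continuous_on_subset[OF c(2)]])
        (use that m d3 p1 k in \<open>auto intro!: mult_pos_pos\<close>)
    with ga show ?thesis by simp
  qed
  have "f1 m < f1 a"
    by (rule mono_strict[OF m(1) continuous_on_subset[OF c(1)]]) (use m d1 gneg in auto)
  with fa p1[OF m] show False by simp
qed

definition red_sol :: "real \<Rightarrow> real \<Rightarrow> (real\<Rightarrow>real) \<Rightarrow> (real\<Rightarrow>real) \<Rightarrow> (real\<Rightarrow>real) \<Rightarrow> bool" where
 "red_sol k L f g h \<longleftrightarrow> continuous_on {0..L} f \<and> continuous_on {0..L} g \<and> continuous_on {0..L} h \<and>
   (\<exists>E. finite E \<and> (\<forall>x\<in>{0<..<L} - E.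
       (f has_real_derivative g x) (at x) \<and>
       (f x > 0 \<longrightarrow> (g has_real_derivative (- k * f x)) (at x) \<and> (h has_real_derivative (k * g x)) (at x)) \<and>
       (f x < 0 \<longrightarrow> (g has_real_derivative (- h x)) (at x) \<and> (h has_real_derivative g x) (at x)))) \<and>
   (\<forall>x\<in>{0..L}. f x = 0 \<longrightarrow> (\<exists>e>0. \<forall>y\<in>{0..L}. y \<noteq> x \<and> \<bar>y - x\<bar> < e \<longrightarrow> f y \<noteq> 0))"

lemma nz_near:
  fixes f :: "real \<Rightarrow> real"
  assumes cf: "continuous_on {0..L} f" and x: "x \<in> {0..L}"
    and iso: "\<forall>x\<in>{0..L}. f x = 0 \<longrightarrow> (\<exists>e>0. \<forall>y\<in>{0..L}. y \<noteq> x \<and> \<bar>y - x\<bar> < e \<longrightarrow> f y \<noteq> 0)"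
  shows "\<exists>e>0. \<forall>y\<in>{0..L}. y \<noteq> x \<and> \<bar>y - x\<bar> < e \<longrightarrow> f y \<noteq> 0"
proof (cases "f x = 0")
  case True then show ?thesis using iso x by blast
next
  case False
  have "continuous (at x within {0..L}) f" using cf x by (simp add: continuous_on_eq_continuous_within)
  moreover have "\<bar>f x\<bar> > 0" using False by simp
  ultimately obtain e where e: "e > 0" "\<forall>y\<in>{0..L}. dist y x < e \<longrightarrow> dist (f y) (f x) < \<bar>f x\<bar>"
    unfolding continuous_within_eps_delta by blast
  show ?thesis
  proof (intro exI[of _ e] conjI ballI impI)
    fix y assume "y \<in> {0..L}" "y \<noteq> x \<and> \<bar>y - x\<bar> < e"
    then have "dist (f y) (f x) < \<bar>f x\<bar>" using e by (auto simp: dist_real_def)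
    then show "f y \<noteq> 0" by (auto simp: dist_real_def)
  qed (use e in auto)
qed

lemma sq3_zero: "(a::real)^2 + b^2 + c^2 = 0 \<longleftrightarrow> a = 0 \<and> b = 0 \<and> c = 0"
proof -
  have 1: "a^2 + b^2 + c^2 = 0 \<longleftrightarrow> a^2 + b^2 = 0 \<and> c^2 = 0"
    by (rule add_nonneg_eq_0_iff) simp_all
  have 2: "a^2 + b^2 = 0 \<longleftrightarrow> a^2 = 0 \<and> b^2 = 0"
    by (rule add_nonneg_eq_0_iff) simp_all
  show ?thesis using 1 2 by simp
qed

lemma ineq_pos:
  fixes a1 a2 b1 b2 c1 c2 k :: real
  assumes "0 \<le> k" "k \<le> 1"
  shows "2*(a1-a2)*(b1-b2) + 2*(b1-b2)*(-k*a1 - -k*a2) + 2*(c1-c2)*(k*b1 - k*b2)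
      \<le> (a1-a2)^2 + (b1-b2)^2 + (c1-c2)^2"
proof -
  define d1 where "d1 = a1 - a2"
  define d2 where "d2 = b1 - b2"
  define d3 where "d3 = c1 - c2"
  have A: "2*d1*d2 \<le> d1^2 + d2^2" using sum_squares_bound[of d1 d2] by simp
  have B: "2*d2*d3 \<le> d2^2 + d3^2" using sum_squares_bound[of d2 d3] by simp
  have "2*(a1-a2)*(b1-b2) + 2*(b1-b2)*(-k*a1 - -k*a2) + 2*(c1-c2)*(k*b1 - k*b2)
      = (1-k)*(2*d1*d2) + k*(2*d2*d3)" unfolding d1_def d2_def d3_def by (simp add: algebra_simps)
  also have "\<dots> \<le> (1-k)*(d1^2 + d2^2) + k*(d2^2 + d3^2)"
    using assms A B by (intro add_mono mult_left_mono) auto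
  also have "\<dots> = d1^2 + d2^2 + d3^2 - (k*d1^2 + (1-k)*d3^2)" by (simp add: algebra_simps)
  also have "\<dots> \<le> d1^2 + d2^2 + d3^2"
  proof -
    have "k*d1^2 \<ge> 0" "(1-k)*d3^2 \<ge> 0" using assms by simp_all
    then show ?thesis by linarith
  qed
  finally show ?thesis unfolding d1_def d2_def d3_def .
qed

lemma ineq_neg:
  fixes a1 a2 b1 b2 c1 c2 :: real
  shows "2*(a1-a2)*(b1-b2) + 2*(b1-b2)*(- c1 - - c2) + 2*(c1-c2)*(b1 - b2)
      \<le> (a1-a2)^2 + (b1-b2)^2 + (c1-c2)^2"
proof -
  have A: "2*(a1-a2)*(b1-b2) \<le> (a1-a2)^2 + (b1-b2)^2" using sum_squares_bound[of "a1-a2" "b1-b2"] by simp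
  have "2*(a1-a2)*(b1-b2) + 2*(b1-b2)*(- c1 - - c2) + 2*(c1-c2)*(b1 - b2) = 2*(a1-a2)*(b1-b2)"
    by (simp add: algebra_simps)
  moreover have "0 \<le> (c1-c2)^2" by simp
  ultimately show ?thesis using A by linarith
qed

lemma D_deriv:
  fixes f1 f2 g1 g2 h1 h2 :: "real \<Rightarrow> real"
  assumes "(f1 has_real_derivative a1) (at x)" "(f2 has_real_derivative a2) (at x)"
    "(g1 has_real_derivative b1) (at x)" "(g2 has_real_derivative b2) (at x)"
    "(h1 has_real_derivative c1) (at x)" "(h2 has_real_derivative c2) (at x)"
  shows "((\<lambda>x. (f1 x - f2 x)^2 + (g1 x - g2 x)^2 + (h1 x - h2 x)^2) has_real_derivative
     (2*(f1 x - f2 x)*(a1 - a2) + 2*(g1 x - g2 x)*(b1 - b2) + 2*(h1 x - h2 x)*(c1 - c2))) (at x)"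
  by (auto intro!: derivative_eq_intros assms) (simp add: algebra_simps)

lemma red_unique:
  fixes f1 g1 h1 f2 g2 h2 :: "real \<Rightarrow> real"
  assumes k: "0 < k" "k \<le> 1" and R1: "red_sol k L f1 g1 h1" and R2: "red_sol k L f2 g2 h2"
    and init: "f1 0 = f2 0" "g1 0 = g2 0" "h1 0 = h2 0"
  shows "\<forall>x\<in>{0..L}. f1 x = f2 x \<and> g1 x = g2 x \<and> h1 x = h2 x"
proof -
  from R1 have cf1: "continuous_on {0..L} f1" and cg1: "continuous_on {0..L} g1" and ch1: "continuous_on {0..L} h1"
    and iso1: "\<forall>x\<in>{0..L}. f1 x = 0 \<longrightarrow> (\<exists>e>0. \<forall>y\<in>{0..L}. y \<noteq> x \<and> \<bar>y - x\<bar> < e \<longrightarrow> f1 y \<noteq> 0)"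
    unfolding red_sol_def by blast+
  from R1 obtain E1 where E1: "finite E1" and dv1: "\<forall>x\<in>{0<..<L} - E1.
       (f1 has_real_derivative g1 x) (at x) \<and>
       (f1 x > 0 \<longrightarrow> (g1 has_real_derivative (- k * f1 x)) (at x) \<and> (h1 has_real_derivative (k * g1 x)) (at x)) \<and>
       (f1 x < 0 \<longrightarrow> (g1 has_real_derivative (- h1 x)) (at x) \<and> (h1 has_real_derivative g1 x) (at x))"
    unfolding red_sol_def by blast
  from R2 have cf2: "continuous_on {0..L} f2" and cg2: "continuous_on {0..L} g2" and ch2: "continuous_on {0..L} h2"
    and iso2: "\<forall>x\<in>{0..L}. f2 x = 0 \<longrightarrow> (\<exists>e>0. \<forall>y\<in>{0..L}. y \<noteq> x \<and> \<bar>y - x\<bar> < e \<longrightarrow> f2 y \<noteq> 0)"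
    unfolding red_sol_def by blast+
  from R2 obtain E2 where E2: "finite E2" and dv2: "\<forall>x\<in>{0<..<L} - E2.
       (f2 has_real_derivative g2 x) (at x) \<and>
       (f2 x > 0 \<longrightarrow> (g2 has_real_derivative (- k * f2 x)) (at x) \<and> (h2 has_real_derivative (k * g2 x)) (at x)) \<and>
       (f2 x < 0 \<longrightarrow> (g2 has_real_derivative (- h2 x)) (at x) \<and> (h2 has_real_derivative g2 x) (at x))"
    unfolding red_sol_def by blast
  define D where "D x = (f1 x - f2 x)^2 + (g1 x - g2 x)^2 + (h1 x - h2 x)^2" for x
  have Dz: "D x = 0 \<longleftrightarrow> f1 x = f2 x \<and> g1 x = g2 x \<and> h1 x = h2 x" for x
    by (simp add: D_def sq3_zero)
  have Dnn: "D x \<ge> 0" for x by (simp add: D_def)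
  have cD: "continuous_on {0..L} D" unfolding D_def
    by (intro continuous_intros cf1 cf2 cg1 cg2 ch1 ch2)
  show ?thesis
  proof (rule ccontr)
    assume nt: "\<not> ?thesis"
    define B where "B = {x\<in>{0..L}. D x \<noteq> 0}"
    have Bne: "B \<noteq> {}" using nt Dz unfolding B_def by auto
    have Bbdd: "bdd_below B" unfolding B_def by (rule bdd_belowI[of _ 0]) auto
    define t0 where "t0 = Inf B"
    have t0ge: "0 \<le> t0" unfolding t0_def using Bne by (intro cInf_greatest) (auto simp: B_def)
    have t0le: "\<And>x. x \<in> B \<Longrightarrow> t0 \<le> x" unfolding t0_def using Bbdd by (auto intro: cInf_lower)
    obtain y0 where y0: "y0 \<in> B" using Bne by auto
    have t0L: "t0 \<le> L" using t0le[OF y0] y0 by (auto simp: B_def)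
    have below: "D x = 0" if "0 \<le> x" "x < t0" for x
    proof (rule ccontr)
      assume "D x \<noteq> 0"
      then have "x \<in> B" using that t0L by (auto simp: B_def)
      then show False using t0le that by force
    qed
    have Dt0: "D t0 = 0"
    proof (cases "t0 = 0")
      case True thus ?thesis using init Dz by auto
    next
      case False
      have cl: "closed {x\<in>{0..L}. D x = 0}" by (rule continuous_closed_preimage_constant[OF cD]) simp
      have "{0..<t0} \<subseteq> {x\<in>{0..L}. D x = 0}" using below t0L by auto
      hence "closure {0..<t0} \<subseteq> {x\<in>{0..L}. D x = 0}" using cl by (rule closure_minimal)
      moreover have "closure {0..<t0} = {0..t0}" using False t0ge by simp
      ultimately have "t0 \<in> {x\<in>{0..L}. D x = 0}" using t0ge by auto
      then show ?thesis by simp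
    qed
    have t0L': "t0 < L"
    proof -
      have "t0 \<le> y0" "y0 \<le> L" "D y0 \<noteq> 0" using t0le[OF y0] y0 by (auto simp: B_def)
      with Dt0 show ?thesis by (cases "t0 = y0") auto
    qed
    have t0I: "t0 \<in> {0..L}" using t0ge t0L by auto
    obtain e1 where e1: "e1 > 0" "\<forall>y\<in>{0..L}. y \<noteq> t0 \<and> \<bar>y - t0\<bar> < e1 \<longrightarrow> f1 y \<noteq> 0"
      using nz_near[OF cf1 t0I iso1] by blast
    obtain e2 where e2: "e2 > 0" "\<forall>y\<in>{0..L}. y \<noteq> t0 \<and> \<bar>y - t0\<bar> < e2 \<longrightarrow> f2 y \<noteq> 0"
      using nz_near[OF cf2 t0I iso2] by blast
    obtain d where d: "d > 0" "\<forall>x\<in>E1 \<union> E2. x \<noteq> t0 \<longrightarrow> d \<le> dist t0 x"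
      using finite_set_avoid[of "E1 \<union> E2" t0] E1 E2 by auto
    define e where "e = min (min e1 e2) (min d (L - t0))"
    have e: "e > 0" "e \<le> e1" "e \<le> e2" "e \<le> d" "t0 + e \<le> L"
      using e1 e2 d t0L' by (auto simp: e_def)
    define I where "I = {t0<..<t0+e}"
    have inI: "x \<in> {0<..<L} - E1" "x \<in> {0<..<L} - E2" "f1 x \<noteq> 0" "f2 x \<noteq> 0" if "x \<in> I" for x
    proof -
      have x: "t0 < x" "x < t0 + e" using that by (auto simp: I_def)
      have nE: "x \<notin> E1 \<union> E2"
      proof
        assume "x \<in> E1 \<union> E2"
        then have "d \<le> dist t0 x" using d x by auto
        then show False using x e by (auto simp: dist_real_def)
      qed
      show "x \<in> {0<..<L} - E1" "x \<in> {0<..<L} - E2" using x e t0ge nE by auto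
      show "f1 x \<noteq> 0" using e1(2) x e t0ge by auto
      show "f2 x \<noteq> 0" using e2(2) x e t0ge by auto
    qed
    have subI: "{t0..t0+e} \<subseteq> {0..L}" using t0ge e by auto
    have subI': "I \<subseteq> {0..L}" using subI by (auto simp: I_def)
    have ate: "t0 < t0 + e" using e by simp
    have finish: False if allz: "\<And>x. x \<in> I \<Longrightarrow> D x = 0"
    proof -
      have "Inf B < t0 + e" using ate by (simp add: t0_def)
      then obtain x where x: "x \<in> B" "x < t0 + e" using cInf_less_iff[OF Bne Bbdd] by auto
      have "t0 \<le> x" using t0le[OF x(1)] .
      moreover have "x \<noteq> t0" using x(1) Dt0 by (auto simp: B_def)
      ultimately have "x \<in> I" using x by (auto simp: I_def)
      then show False using allz x(1) by (auto simp: B_def)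
    qed
    have s1: "(\<forall>x\<in>I. f1 x > 0) \<or> (\<forall>x\<in>I. f1 x < 0)"
      unfolding I_def by (rule sign_const) (use continuous_on_subset[OF cf1 subI'] inI in \<open>auto simp: I_def\<close>)
    have s2: "(\<forall>x\<in>I. f2 x > 0) \<or> (\<forall>x\<in>I. f2 x < 0)"
      unfolding I_def by (rule sign_const) (use continuous_on_subset[OF cf2 subI'] inI in \<open>auto simp: I_def\<close>)
    have gr: "D x = 0" if x: "x \<in> I" and
      Dd: "\<And>y. t0 < y \<Longrightarrow> y < t0 + e \<Longrightarrow> (D has_real_derivative D' y) (at y)" and
      Dle: "\<And>y. t0 < y \<Longrightarrow> y < t0 + e \<Longrightarrow> D' y \<le> D y" for x D'
    proof -
      have x': "t0 < x" "x < t0 + e" using x by (auto simp: I_def)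
      show ?thesis
      proof (rule gron[where E'=D', OF x'(1)])
        show "continuous_on {t0..x} D" by (rule continuous_on_subset[OF cD]) (use x' subI in auto)
      qed (use Dt0 Dnn Dd Dle x' in auto)
    qed
    from s1 s2 show False
    proof (elim disjE)
      assume p1: "\<forall>x\<in>I. f1 x > 0" and p2: "\<forall>x\<in>I. f2 x > 0"
      show False
      proof (rule finish)
        fix x assume "x \<in> I"
        show "D x = 0"
        proof (rule gr[OF \<open>x \<in> I\<close>])
          fix y assume y: "t0 < y" "y < t0 + e"
          then have yI: "y \<in> I" by (simp add: I_def)
          show "(D has_real_derivative (2*(f1 y - f2 y)*(g1 y - g2 y) + 2*(g1 y - g2 y)*(-k*f1 y - -k*f2 y)
              + 2*(h1 y - h2 y)*(k*g1 y - k*g2 y))) (at y)"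
            unfolding D_def
            by (rule D_deriv) (use dv1 dv2 inI[OF yI] p1 p2 yI in auto)
          show "2*(f1 y - f2 y)*(g1 y - g2 y) + 2*(g1 y - g2 y)*(-k*f1 y - -k*f2 y)
              + 2*(h1 y - h2 y)*(k*g1 y - k*g2 y) \<le> D y"
            unfolding D_def by (rule ineq_pos) (use k in auto)
        qed
      qed
    next
      assume p1: "\<forall>x\<in>I. f1 x < 0" and p2: "\<forall>x\<in>I. f2 x < 0"
      show False
      proof (rule finish)
        fix x assume "x \<in> I"
        show "D x = 0"
        proof (rule gr[OF \<open>x \<in> I\<close>])
          fix y assume y: "t0 < y" "y < t0 + e"
          then have yI: "y \<in> I" by (simp add: I_def)
          show "(D has_real_derivative (2*(f1 y - f2 y)*(g1 y - g2 y) + 2*(g1 y - g2 y)*(- h1 y - - h2 y)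
              + 2*(h1 y - h2 y)*(g1 y - g2 y))) (at y)"
            unfolding D_def
            by (rule D_deriv) (use dv1 dv2 inI[OF yI] p1 p2 yI in auto)
          show "2*(f1 y - f2 y)*(g1 y - g2 y) + 2*(g1 y - g2 y)*(- h1 y - - h2 y)
              + 2*(h1 y - h2 y)*(g1 y - g2 y) \<le> D y"
            unfolding D_def by (rule ineq_neg)
        qed
      qed
    next
      assume p1: "\<forall>x\<in>I. f1 x > 0" and p2: "\<forall>x\<in>I. f2 x < 0"
      show False
      proof (rule mode_contra[OF ate k(1)])
        show "continuous_on {t0..t0+e} f1" "continuous_on {t0..t0+e} g1"
          "continuous_on {t0..t0+e} f2" "continuous_on {t0..t0+e} g2"
          using continuous_on_subset[OF _ subI] cf1 cg1 cf2 cg2 by blast+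
        show "f1 t0 = f2 t0" "g1 t0 = g2 t0" using Dt0 Dz by auto
      qed (use dv1 dv2 inI p1 p2 in \<open>auto simp: I_def\<close>)
    next
      assume p1: "\<forall>x\<in>I. f1 x < 0" and p2: "\<forall>x\<in>I. f2 x > 0"
      show False
      proof (rule mode_contra[OF ate k(1), of f2 g2 f1 g1])
        show "continuous_on {t0..t0+e} f1" "continuous_on {t0..t0+e} g1"
          "continuous_on {t0..t0+e} f2" "continuous_on {t0..t0+e} g2"
          using continuous_on_subset[OF _ subI] cf1 cg1 cf2 cg2 by blast+
        show "f2 t0 = f1 t0" "g2 t0 = g1 t0" using Dt0 Dz by auto
      qed (use dv1 dv2 inI p1 p2 in \<open>auto simp: I_def\<close>)
    qed
  qed
qed

lemma neg_mv: "(- M) *v (v::real^3) = - (M *v v)"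
  by (simp add: vec_eq_iff matrix_vector_mult_def sum_negf)

lemma shift_deriv:
  assumes "(f has_real_derivative y) (at (t0 + x))"
  shows "((\<lambda>x. f (t0 + x)) has_real_derivative y) (at x)"
  using DERIV_shift[of f y x t0] assms by (simp add: add.commute)

lemma mode:
  assumes NE: "normal_extremal g T \<psi> p A" and g: "0 < g" "g < pi/2"
    and t: "t \<in> {0<..<T}" and cA: "continuous (at t within {0..T}) A"
    and nz: "phi (F1 g) p \<psi> t \<noteq> 0"
  shows "A t = (if phi (F1 g) p \<psi> t > 0 then Xm g else Ym)"
proof -
  have AV: "\<forall>s\<in>{0..T}. A s \<in> {Xm g, Ym}" using NE unfolding normal_extremal_def admissible_control_def by auto
  have tT: "t \<in> {0..T}" using t by auto
  obtain d1 where d1: "d1 > 0" "\<forall>s\<in>{0..T}. dist s t < d1 \<longrightarrow> A s = A t"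
    using A_loc[OF AV XY_ne[OF g] tT cA] by auto
  have cphi: "continuous_on {0..T} (phi (F1 g) p \<psi>)" using ext_cont[OF NE] by (intro phi_cont) auto
  have "continuous (at t within {0..T}) (phi (F1 g) p \<psi>)" using cphi tT by (simp add: continuous_on_eq_continuous_within)
  moreover have "\<bar>phi (F1 g) p \<psi> t\<bar> > 0" using nz by simp
  ultimately obtain d2 where d2: "d2 > 0" "\<forall>s\<in>{0..T}. dist s t < d2 \<longrightarrow> dist (phi (F1 g) p \<psi> s) (phi (F1 g) p \<psi> t) < \<bar>phi (F1 g) p \<psi> t\<bar>"
    unfolding continuous_within_eps_delta by blast
  have AE: "AE s in lborel. s \<in> {0..T} \<longrightarrow> p s \<bullet> (A s *v \<psi> s) = max (p s \<bullet> (Xm g *v \<psi> s)) (p s \<bullet> (Ym *v \<psi> s))"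
    using NE unfolding normal_extremal_def by blast
  then obtain N where N: "{s \<in> space lborel. \<not> (s \<in> {0..T} \<longrightarrow> p s \<bullet> (A s *v \<psi> s) = max (p s \<bullet> (Xm g *v \<psi> s)) (p s \<bullet> (Ym *v \<psi> s)))} \<subseteq> N"
     "emeasure lborel N = 0" "N \<in> sets lborel"
    by (rule AE_E)
  define d where "d = min (min d1 d2) (min t (T - t))"
  have d: "d > 0" "d \<le> d1" "d \<le> d2" "d \<le> t" "d \<le> T - t" using d1 d2 t by (auto simp: d_def)
  have "\<not> {t - d<..<t + d} \<subseteq> N"
  proof
    assume "{t - d<..<t + d} \<subseteq> N"
    hence "emeasure lborel {t - d<..<t + d} \<le> emeasure lborel N" using N(3) by (rule emeasure_mono)
    hence "emeasure lborel {t - d<..<t + d} = 0" using N by simp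
    moreover have "emeasure lborel {t - d<..<t + d} = ennreal (2*d)" using d by simp
    ultimately show False using d by simp
  qed
  then obtain s where s: "s \<in> {t - d<..<t + d}" "s \<notin> N" by blast
  have sT: "s \<in> {0..T}" using s d by auto
  have ds: "dist s t < d1" "dist s t < d2" using s d by (auto simp: dist_real_def)
  have As: "A s = A t" using d1 sT ds by auto
  have Ps: "p s \<bullet> (A s *v \<psi> s) = max (p s \<bullet> (Xm g *v \<psi> s)) (p s \<bullet> (Ym *v \<psi> s))" using N(1) s sT by auto
  have ph: "phi (F1 g) p \<psi> s = p s \<bullet> (Xm g *v \<psi> s) - p s \<bullet> (Ym *v \<psi> s)"
    by (simp add: phi_def F1_def matrix_vector_mult_diff_rdistrib inner_diff_right)
  have close: "dist (phi (F1 g) p \<psi> s) (phi (F1 g) p \<psi> t) < \<bar>phi (F1 g) p \<psi> t\<bar>" using d2 sT ds by auto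
  show ?thesis
  proof (cases "phi (F1 g) p \<psi> t > 0")
    case True
    then have "phi (F1 g) p \<psi> s > 0" using close by (auto simp: dist_real_def)
    then have "A s \<noteq> Ym" using Ps ph by (auto simp: max_def split: if_splits)
    then show ?thesis using True AV tT As by auto
  next
    case False
    then have "phi (F1 g) p \<psi> t < 0" using nz by simp
    then have "phi (F1 g) p \<psi> s < 0" using close by (auto simp: dist_real_def)
    then have "A s \<noteq> Xm g" using Ps ph by (auto simp: max_def split: if_splits)
    then show ?thesis using False AV tT As by auto
  qed
qed

lemma zeros_finite:
  fixes f :: "real \<Rightarrow> real"
  assumes cf: "continuous_on {0..L} f"
    and iso: "\<forall>x\<in>{0..L}. f x = 0 \<longrightarrow> (\<exists>e>0. \<forall>y\<in>{0..L}. y \<noteq> x \<and> \<bar>y - x\<bar> < e \<longrightarrow> f y \<noteq> 0)"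
  shows "finite {x\<in>{0..L}. f x = 0}"
proof (rule ccontr)
  let ?Z = "{x\<in>{0..L}. f x = 0}"
  assume inf: "infinite ?Z"
  have sub: "?Z \<subseteq> {0..L}" by blast
  have "\<exists>x\<in>{0..L}. x islimpt ?Z"
    by (rule Heine_Borel_imp_Bolzano_Weierstrass[OF compact_Icc inf sub])
  then obtain x where x: "x \<in> {0..L}" "x islimpt ?Z" by blast
  have cl: "closed ?Z" by (rule continuous_closed_preimage_constant[OF cf closed_atLeastAtMost])
  have xZ: "x \<in> ?Z" using cl x(2) closed_limpt by blast
  then have "f x = 0" by blast
  then obtain e where e: "e > 0" "\<forall>y\<in>{0..L}. y \<noteq> x \<and> \<bar>y - x\<bar> < e \<longrightarrow> f y \<noteq> 0"
    using iso x(1) by blast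
  from x(2) e(1) obtain y where y: "y \<in> ?Z" "y \<noteq> x" "dist y x < e"
    unfolding islimpt_approachable by blast
  have "\<bar>y - x\<bar> < e" using y(3) by (simp add: dist_real_def)
  then show False using e(2) y(1,2) by blast
qed

lemma inner_smul_mv: "p \<bullet> ((c *\<^sub>R M) *v (v::real^3)) = c * (p \<bullet> (M *v v))"
proof -
  have "(c *\<^sub>R M) *v v = c *\<^sub>R (M *v v)" by (rule scaleR_matrix_vector_assoc[symmetric])
  then show ?thesis by simp
qed

lemma ext_red:
  assumes RE: "regular_extremal g T \<psi> p A" and g: "0 < g" "g < pi/2"
    and t0: "0 \<le> t0" and L: "0 \<le> L" "t0 + L \<le> T"
  shows "red_sol ((sin g)^2) L (\<lambda>x. phi (F1 g) p \<psi> (t0+x)) (\<lambda>x. phi (F2 g) p \<psi> (t0+x)) (\<lambda>x. phi (F3 g) p \<psi> (t0+x))"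
proof -
  have NE: "normal_extremal g T \<psi> p A" using RE unfolding regular_extremal_def by blast
  obtain S where S: "finite S" "\<forall>t\<in>{0..T} - S. continuous (at t within {0..T}) A"
    using NE unfolding normal_extremal_def admissible_control_def by blast
  have AV: "\<forall>s\<in>{0..T}. A s \<in> {Xm g, Ym}" using NE unfolding normal_extremal_def admissible_control_def by auto
  have cpsi: "continuous_on {0..T} \<psi>" and cp: "continuous_on {0..T} p" using ext_cont[OF NE] by auto
  have sub: "(\<lambda>x. t0 + x) ` {0..L} \<subseteq> {0..T}" using t0 L by auto
  have cont: "continuous_on {0..L} (\<lambda>x. phi F p \<psi> (t0 + x))" for F
    by (rule continuous_on_compose2[OF phi_cont[OF cpsi cp] _ sub]) (intro continuous_intros)
  define E where "E = (\<lambda>s. s - t0) ` S"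
  have E: "finite E" using S by (simp add: E_def)
  have der: "((\<lambda>x. phi (F1 g) p \<psi> (t0+x)) has_real_derivative phi (F2 g) p \<psi> (t0+x)) (at x) \<and>
       (phi (F1 g) p \<psi> (t0+x) > 0 \<longrightarrow>
          ((\<lambda>x. phi (F2 g) p \<psi> (t0+x)) has_real_derivative (- ((sin g)^2) * phi (F1 g) p \<psi> (t0+x))) (at x) \<and>
          ((\<lambda>x. phi (F3 g) p \<psi> (t0+x)) has_real_derivative ((sin g)^2 * phi (F2 g) p \<psi> (t0+x))) (at x)) \<and>
       (phi (F1 g) p \<psi> (t0+x) < 0 \<longrightarrow>
          ((\<lambda>x. phi (F2 g) p \<psi> (t0+x)) has_real_derivative (- phi (F3 g) p \<psi> (t0+x))) (at x) \<and>
          ((\<lambda>x. phi (F3 g) p \<psi> (t0+x)) has_real_derivative (phi (F2 g) p \<psi> (t0+x))) (at x))"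
    if x: "x \<in> {0<..<L} - E" for x
  proof -
    define t where "t = t0 + x"
    have t: "t \<in> {0<..<T}" using x t0 L by (auto simp: t_def)
    have tS: "t \<notin> S"
    proof
      assume "t \<in> S"
      then have "x \<in> E" unfolding E_def t_def by (rule rev_image_eqI) simp
      with x show False by simp
    qed
    have cA: "continuous (at t within {0..T}) A" using S t tS by auto
    note dd = ext_deriv[OF NE g t cA]
    have pd: "(phi F p \<psi> has_real_derivative (p t \<bullet> ((F ** A t - A t ** F) *v \<psi> t))) (at t)" for F
      by (rule phi_deriv[OF dd])
    have pd': "((\<lambda>x. phi F p \<psi> (t0+x)) has_real_derivative (p t \<bullet> ((F ** A t - A t ** F) *v \<psi> t))) (at x)" for F
      by (rule shift_deriv) (use pd t_def in simp)
    have At: "A t \<in> {Xm g, Ym}" using AV t by auto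
    have d1: "p t \<bullet> ((F1 g ** A t - A t ** F1 g) *v \<psi> t) = phi (F2 g) p \<psi> t"
      using At br11 br12 by (auto simp: phi_def)
    show ?thesis
    proof (intro conjI impI)
      show "((\<lambda>x. phi (F1 g) p \<psi> (t0+x)) has_real_derivative phi (F2 g) p \<psi> (t0+x)) (at x)"
        using pd'[of "F1 g"] d1 by (simp add: t_def)
    next
      assume pos: "phi (F1 g) p \<psi> (t0+x) > 0"
      have AX0: "A t = Xm g" using mode[OF NE g t cA] pos by (simp add: t_def)
      have AX: "A (t0 + x) = Xm g" using AX0 by (simp add: t_def)
      show "((\<lambda>x. phi (F2 g) p \<psi> (t0+x)) has_real_derivative (- ((sin g)^2) * phi (F1 g) p \<psi> (t0+x))) (at x)"
        using pd'[of "F2 g"] by (simp add: AX br21 neg_mv inner_smul_mv phi_def t_def)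
      show "((\<lambda>x. phi (F3 g) p \<psi> (t0+x)) has_real_derivative ((sin g)^2 * phi (F2 g) p \<psi> (t0+x))) (at x)"
        using pd'[of "F3 g"] by (simp add: AX br31 inner_smul_mv phi_def t_def)
    next
      assume neg: "phi (F1 g) p \<psi> (t0+x) < 0"
      have AY0: "A t = Ym" using mode[OF NE g t cA] neg by (simp add: t_def)
      have AY: "A (t0 + x) = Ym" using AY0 by (simp add: t_def)
      show "((\<lambda>x. phi (F2 g) p \<psi> (t0+x)) has_real_derivative (- phi (F3 g) p \<psi> (t0+x))) (at x)"
        using pd'[of "F2 g"] by (simp add: AY br22 neg_mv phi_def t_def)
      show "((\<lambda>x. phi (F3 g) p \<psi> (t0+x)) has_real_derivative (phi (F2 g) p \<psi> (t0+x))) (at x)"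
        using pd'[of "F3 g"] by (simp add: AY br32 phi_def t_def)
    qed
  qed
  have iso: "\<forall>x\<in>{0..L}. phi (F1 g) p \<psi> (t0+x) = 0 \<longrightarrow>
      (\<exists>e>0. \<forall>y\<in>{0..L}. y \<noteq> x \<and> \<bar>y - x\<bar> < e \<longrightarrow> phi (F1 g) p \<psi> (t0+y) \<noteq> 0)"
  proof (intro ballI impI)
    fix x assume x: "x \<in> {0..L}" and z: "phi (F1 g) p \<psi> (t0+x) = 0"
    have "t0 + x \<in> {0..T}" using x t0 L by auto
    then obtain e where e: "e > 0" "\<forall>s\<in>{0..T}. s \<noteq> t0 + x \<and> \<bar>s - (t0 + x)\<bar> < e \<longrightarrow> phi (F1 g) p \<psi> s \<noteq> 0"
      using RE z unfolding regular_extremal_def by blast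
    show "\<exists>e>0. \<forall>y\<in>{0..L}. y \<noteq> x \<and> \<bar>y - x\<bar> < e \<longrightarrow> phi (F1 g) p \<psi> (t0+y) \<noteq> 0"
    proof (intro exI[of _ e] conjI ballI impI)
      fix y assume y: "y \<in> {0..L}" "y \<noteq> x \<and> \<bar>y - x\<bar> < e"
      have "t0 + y \<in> {0..T}" using y t0 L by auto
      then show "phi (F1 g) p \<psi> (t0+y) \<noteq> 0" using e y by auto
    qed (use e in auto)
  qed
  show ?thesis unfolding red_sol_def
  proof (intro conjI)
    show "\<exists>E. finite E \<and> (\<forall>x\<in>{0<..<L} - E.
       ((\<lambda>x. phi (F1 g) p \<psi> (t0+x)) has_real_derivative phi (F2 g) p \<psi> (t0+x)) (at x) \<and>
       (phi (F1 g) p \<psi> (t0+x) > 0 \<longrightarrow>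
          ((\<lambda>x. phi (F2 g) p \<psi> (t0+x)) has_real_derivative (- ((sin g)^2) * phi (F1 g) p \<psi> (t0+x))) (at x) \<and>
          ((\<lambda>x. phi (F3 g) p \<psi> (t0+x)) has_real_derivative ((sin g)^2 * phi (F2 g) p \<psi> (t0+x))) (at x)) \<and>
       (phi (F1 g) p \<psi> (t0+x) < 0 \<longrightarrow>
          ((\<lambda>x. phi (F2 g) p \<psi> (t0+x)) has_real_derivative (- phi (F3 g) p \<psi> (t0+x))) (at x) \<and>
          ((\<lambda>x. phi (F3 g) p \<psi> (t0+x)) has_real_derivative (phi (F2 g) p \<psi> (t0+x))) (at x)))"
      by (rule exI[of _ E], rule conjI[OF E], rule ballI, rule der)
  qed (rule cont iso)+
qed

theorem mainTheorem9:
  fixes \<gamma> T1 T2 t1 t2 a b :: real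
    and \<psi>1 p1 \<psi>2 p2 :: "real \<Rightarrow> real^3"
    and A1 A2 :: "real \<Rightarrow> real^3^3"
  assumes "0 < \<gamma>" and "\<gamma> < pi / 2"
    and "regular_extremal \<gamma> T1 \<psi>1 p1 A1"
    and "regular_extremal \<gamma> T2 \<psi>2 p2 A2"
    and "switching_time T1 A1 t1"
    and "switching_time T2 A2 t2"
    and "phis \<gamma> p1 \<psi>1 t1 = (0, a, b)"
    and "phis \<gamma> p2 \<psi>2 t2 = (0, a, b)"
    and "a \<noteq> 0"
  shows "(\<forall>\<tau>\<ge>0. t1 + \<tau> \<le> T1 \<and> t2 + \<tau> \<le> T2 \<longrightarrow>
            phis \<gamma> p1 \<psi>1 (t1 + \<tau>) = phis \<gamma> p2 \<psi>2 (t2 + \<tau>))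
       \<and> (AE \<tau> in lborel. 0 \<le> \<tau> \<and> t1 + \<tau> \<le> T1 \<and> t2 + \<tau> \<le> T2 \<longrightarrow>
            A1 (t1 + \<tau>) = A2 (t2 + \<tau>))"
proof -
  note g = assms(1,2)
  note RE1 = assms(3) and RE2 = assms(4)
  have NE1: "normal_extremal \<gamma> T1 \<psi>1 p1 A1" using RE1 unfolding regular_extremal_def by blast
  have NE2: "normal_extremal \<gamma> T2 \<psi>2 p2 A2" using RE2 unfolding regular_extremal_def by blast
  have t1: "0 \<le> t1" "t1 \<le> T1" using assms(5) unfolding switching_time_def by auto
  have t2: "0 \<le> t2" "t2 \<le> T2" using assms(6) unfolding switching_time_def by auto
  define L where "L = min (T1 - t1) (T2 - t2)"
  have L: "0 \<le> L" "t1 + L \<le> T1" "t2 + L \<le> T2" using t1 t2 by (auto simp: L_def)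
  have R1: "red_sol ((sin \<gamma>)^2) L (\<lambda>x. phi (F1 \<gamma>) p1 \<psi>1 (t1+x)) (\<lambda>x. phi (F2 \<gamma>) p1 \<psi>1 (t1+x)) (\<lambda>x. phi (F3 \<gamma>) p1 \<psi>1 (t1+x))"
    by (rule ext_red[OF RE1 g t1(1) L(1,2)])
  have R2: "red_sol ((sin \<gamma>)^2) L (\<lambda>x. phi (F1 \<gamma>) p2 \<psi>2 (t2+x)) (\<lambda>x. phi (F2 \<gamma>) p2 \<psi>2 (t2+x)) (\<lambda>x. phi (F3 \<gamma>) p2 \<psi>2 (t2+x))"
    by (rule ext_red[OF RE2 g t2(1) L(1,3)])
  have k: "0 < (sin \<gamma>)^2" "(sin \<gamma>)^2 \<le> 1" using sc_pos[OF g] by (auto simp: abs_square_le_1)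
  have init: "phi (F1 \<gamma>) p1 \<psi>1 t1 = phi (F1 \<gamma>) p2 \<psi>2 t2" "phi (F2 \<gamma>) p1 \<psi>1 t1 = phi (F2 \<gamma>) p2 \<psi>2 t2"
    "phi (F3 \<gamma>) p1 \<psi>1 t1 = phi (F3 \<gamma>) p2 \<psi>2 t2"
    using assms(7,8) by (auto simp: phis_def)
  have U: "\<forall>x\<in>{0..L}. phi (F1 \<gamma>) p1 \<psi>1 (t1+x) = phi (F1 \<gamma>) p2 \<psi>2 (t2+x) \<and>
      phi (F2 \<gamma>) p1 \<psi>1 (t1+x) = phi (F2 \<gamma>) p2 \<psi>2 (t2+x) \<and>
      phi (F3 \<gamma>) p1 \<psi>1 (t1+x) = phi (F3 \<gamma>) p2 \<psi>2 (t2+x)"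
    by (rule red_unique[OF k R1 R2]) (use init in simp_all)
  have part1: "\<forall>\<tau>\<ge>0. t1 + \<tau> \<le> T1 \<and> t2 + \<tau> \<le> T2 \<longrightarrow>
            phis \<gamma> p1 \<psi>1 (t1 + \<tau>) = phis \<gamma> p2 \<psi>2 (t2 + \<tau>)"
  proof (intro allI impI)
    fix \<tau> :: real assume "\<tau> \<ge> 0" "t1 + \<tau> \<le> T1 \<and> t2 + \<tau> \<le> T2"
    then have "\<tau> \<in> {0..L}" by (auto simp: L_def)
    then show "phis \<gamma> p1 \<psi>1 (t1 + \<tau>) = phis \<gamma> p2 \<psi>2 (t2 + \<tau>)" using U by (simp add: phis_def)
  qed
  obtain S1 where S1: "finite S1" "\<forall>t\<in>{0..T1} - S1. continuous (at t within {0..T1}) A1"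
    using NE1 unfolding normal_extremal_def admissible_control_def by blast
  obtain S2 where S2: "finite S2" "\<forall>t\<in>{0..T2} - S2. continuous (at t within {0..T2}) A2"
    using NE2 unfolding normal_extremal_def admissible_control_def by blast
  define Z where "Z = {x\<in>{0..L}. phi (F1 \<gamma>) p1 \<psi>1 (t1+x) = 0}"
  have Z: "finite Z" unfolding Z_def
    by (rule zeros_finite) (use R1 in \<open>simp_all add: red_sol_def\<close>)
  define Bad where "Bad = Z \<union> (\<lambda>s. s - t1) ` S1 \<union> (\<lambda>s. s - t2) ` S2 \<union> {0, L}"
  have Bad: "finite Bad" using Z S1 S2 by (simp add: Bad_def)
  have part2: "AE \<tau> in lborel. 0 \<le> \<tau> \<and> t1 + \<tau> \<le> T1 \<and> t2 + \<tau> \<le> T2 \<longrightarrow> A1 (t1 + \<tau>) = A2 (t2 + \<tau>)"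
  proof (rule AE_I'[OF finite_imp_null_set_lborel[OF Bad]])
    show "{x \<in> space lborel. \<not> (0 \<le> x \<and> t1 + x \<le> T1 \<and> t2 + x \<le> T2 \<longrightarrow> A1 (t1 + x) = A2 (t2 + x))} \<subseteq> Bad"
    proof (rule subsetI, rule ccontr)
      fix x assume xin: "x \<in> {x \<in> space lborel. \<not> (0 \<le> x \<and> t1 + x \<le> T1 \<and> t2 + x \<le> T2 \<longrightarrow> A1 (t1 + x) = A2 (t2 + x))}"
        and xB: "x \<notin> Bad"
      have x: "0 \<le> x" "t1 + x \<le> T1" "t2 + x \<le> T2" "A1 (t1 + x) \<noteq> A2 (t2 + x)" using xin by auto
      have xL: "x \<in> {0..L}" using x by (auto simp: L_def)
      have x0: "x \<noteq> 0" "x \<noteq> L" using xB by (auto simp: Bad_def)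
      have tt1: "t1 + x \<in> {0<..<T1}" using x x0 xL t1 L by (auto simp: L_def)
      have tt2: "t2 + x \<in> {0<..<T2}" using x x0 xL t2 L by (auto simp: L_def)
      have nS1: "t1 + x \<notin> S1"
      proof
        assume "t1 + x \<in> S1"
        then have "x \<in> (\<lambda>s. s - t1) ` S1" by (rule rev_image_eqI) simp
        with xB show False by (simp add: Bad_def)
      qed
      have nS2: "t2 + x \<notin> S2"
      proof
        assume "t2 + x \<in> S2"
        then have "x \<in> (\<lambda>s. s - t2) ` S2" by (rule rev_image_eqI) simp
        with xB show False by (simp add: Bad_def)
      qed
      have cA1: "continuous (at (t1 + x) within {0..T1}) A1" using S1 tt1 nS1 by auto
      have cA2: "continuous (at (t2 + x) within {0..T2}) A2" using S2 tt2 nS2 by auto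
      have nz1: "phi (F1 \<gamma>) p1 \<psi>1 (t1 + x) \<noteq> 0" using xB xL by (auto simp: Bad_def Z_def)
      have eq: "phi (F1 \<gamma>) p1 \<psi>1 (t1 + x) = phi (F1 \<gamma>) p2 \<psi>2 (t2 + x)" using U xL by blast
      have nz2: "phi (F1 \<gamma>) p2 \<psi>2 (t2 + x) \<noteq> 0" using nz1 eq by simp
      have "A1 (t1 + x) = A2 (t2 + x)"
        using mode[OF NE1 g tt1 cA1 nz1] mode[OF NE2 g tt2 cA2 nz2] eq by simp
      with x(4) show False by simp
    qed
  qed
  show ?thesis using part1 part2 by blast
qed

end
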